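(* Let $T$ be the Lr $(\mathbf a,\tau)$ interval exchange transformation and assume $T$ has no periodic points. Then: (i) if $x\ne y$ in $[0,1)$, the pair $\mathcal I(x),\mathcal I(y)$ is neither positively nor negatively asymptotic; (ii) if $x\ne y$ in $(0,1]$, the pair $\tilde{\mathcal I}(x),\tilde{\mathcal I}(y)$ is neither positively nor negatively asymptotic; (iii) if $\alpha\ne\beta$ are points of $X$ with $\alpha\in X_0$, the pair $\alpha,\beta$ is neither positively nor negatively asymptotic; (iv) the maps $\mathcal I$ and $\tilde{\mathcal I}$ are injective.
   Context: Fix $n\ge 2$, $[n]=\{1,\dots,n\}$, a vector $\mathbf a=(a_1,\dots,a_n)$ with all $a_i>0$ and $\sum_i a_i=1$, and a permutation $\tau$ of $[n]$. Put $b_0=0$, $b_i=\sum_{j=1}^i a_j$, $J_i=[b_{i-1},b_i)$, $\tilde J_i=(b_{i-1},b_i]$ for $i\in[n]$, and $D=\{b_1,\dots,b_{n-1}\}$. Put $b^\tau_0=0$, $b^\tau_i=\sum_{j=1}^i a_{\tau^{-1}(j)}$. The Lr $(\mathbf a,\tau)$ interval exchange transformation $T:[0,1)\to[0,1)$ and its dual $\tilde T:(0,1]\to(0,1]$ are defined by $x\mapsto x-b_{i-1}+b^\tau_{\tau(i)-1}$ for $x\in J_i$ (resp. $x\in\tilde J_i$); both are bijections. Let $\Omega=[n]^{\mathbb Z}$ with the product topology and shift $S(\alpha)_i=\alpha_{i+1}$. The itinerary maps are $\mathcal I(x)_k=i\iff T^kx\in J_i$ ($x\in[0,1)$) and $\tilde{\mathcal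 I}(x)_k=i\iff\tilde T^kx\in\tilde J_i$ ($x\in(0,1]$), $k\in\mathbb Z$. Let $D_\infty=\{0,1\}\cup\bigcup_{k\in\mathbb Z}T^k(D)$, $R=[0,1]\setminus D_\infty$, $X_0=\mathcal I(R)$, $X=\overline{X_0}$. Points $\alpha,\beta\in\Omega$ are positively (resp. negatively) asymptotic if there is $N\in\mathbb N$ with $\alpha_i=\beta_i$ for all $i\ge N$ (resp. all $i\le -N$). A periodic point of $T$ is $x$ with $T^kx=x$ for some $k\in\mathbb N$. *)

theory Defs
  imports "HOL-Analysis.Analysis"
begin

text \<open>Lr (a,tau) interval exchange transformations. Indices run over {1..n};
  a :: nat => real is the length vector (a i for i in {1..n}), tau :: nat => nat
  a permutation of {1..n}.\<close>

definition iet_b :: "(nat \<Rightarrow> real) \<Rightarrow> nat \<Rightarrow> real" where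
  "iet_b a i = (\<Sum>j=1..i. a j)"

definition iet_btau :: "nat \<Rightarrow> (nat \<Rightarrow> real) \<Rightarrow> (nat \<Rightarrow> nat) \<Rightarrow> nat \<Rightarrow> real" where
  "iet_btau n a \<tau> i = (\<Sum>j=1..i. a (inv_into {1..n} \<tau> j))"

definition iet_J :: "(nat \<Rightarrow> real) \<Rightarrow> nat \<Rightarrow> real set" where
  "iet_J a i = {iet_b a (i - 1) ..< iet_b a i}"

definition iet_Jd :: "(nat \<Rightarrow> real) \<Rightarrow> nat \<Rightarrow> real set" where
  "iet_Jd a i = {iet_b a (i - 1) <.. iet_b a i}"

definition iet_idx :: "nat \<Rightarrow> (nat \<Rightarrow> real) \<Rightarrow> real \<Rightarrow> nat" where
  "iet_idx n a x = (THE i. i \<in> {1..n} \<and> x \<in> iet_J a i)"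

definition iet_idxd :: "nat \<Rightarrow> (nat \<Rightarrow> real) \<Rightarrow> real \<Rightarrow> nat" where
  "iet_idxd n a x = (THE i. i \<in> {1..n} \<and> x \<in> iet_Jd a i)"

definition iet_T :: "nat \<Rightarrow> (nat \<Rightarrow> real) \<Rightarrow> (nat \<Rightarrow> nat) \<Rightarrow> real \<Rightarrow> real" where
  "iet_T n a \<tau> x = (let i = iet_idx n a x in
      x - iet_b a (i - 1) + iet_btau n a \<tau> (\<tau> i - 1))"

definition iet_Td :: "nat \<Rightarrow> (nat \<Rightarrow> real) \<Rightarrow> (nat \<Rightarrow> nat) \<Rightarrow> real \<Rightarrow> real" where
  "iet_Td n a \<tau> x = (let i = iet_idxd n a x in
      x - iet_b a (i - 1) + iet_btau n a \<tau> (\<tau> i - 1))"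

definition iter_int :: "('a \<Rightarrow> 'a) \<Rightarrow> 'a set \<Rightarrow> int \<Rightarrow> 'a \<Rightarrow> 'a" where
  "iter_int f A k x = (if 0 \<le> k then (f ^^ nat k) x else (inv_into A f ^^ nat (- k)) x)"

definition iet_itin :: "nat \<Rightarrow> (nat \<Rightarrow> real) \<Rightarrow> (nat \<Rightarrow> nat) \<Rightarrow> real \<Rightarrow> int \<Rightarrow> nat" where
  "iet_itin n a \<tau> x k = iet_idx n a (iter_int (iet_T n a \<tau>) {0..<1} k x)"

definition iet_itind :: "nat \<Rightarrow> (nat \<Rightarrow> real) \<Rightarrow> (nat \<Rightarrow> nat) \<Rightarrow> real \<Rightarrow> int \<Rightarrow> nat" where
  "iet_itind n a \<tau> x k = iet_idxd n a (iter_int (iet_Td n a \<tau>) {0<..1} k x)"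

text \<open>D = {b_1,...,b_{n-1}}, D_infty, R, X_0 and X (closure in the product
  topology of the discrete space nat, i.e. of Omega).\<close>
definition iet_D :: "nat \<Rightarrow> (nat \<Rightarrow> real) \<Rightarrow> real set" where
  "iet_D n a = iet_b a ` {1..n-1}"

definition iet_Dinf :: "nat \<Rightarrow> (nat \<Rightarrow> real) \<Rightarrow> (nat \<Rightarrow> nat) \<Rightarrow> real set" where
  "iet_Dinf n a \<tau> = {0, 1} \<union> (\<Union>k::int. iter_int (iet_T n a \<tau>) {0..<1} k ` iet_D n a)"

definition iet_R :: "nat \<Rightarrow> (nat \<Rightarrow> real) \<Rightarrow> (nat \<Rightarrow> nat) \<Rightarrow> real set" where
  "iet_R n a \<tau> = {0..1} - iet_Dinf n a \<tau>"

definition iet_X0 :: "nat \<Rightarrow> (nat \<Rightarrow> real) \<Rightarrow> (nat \<Rightarrow> nat) \<Rightarrow> (int \<Rightarrow> nat) set" where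
  "iet_X0 n a \<tau> = iet_itin n a \<tau> ` iet_R n a \<tau>"

definition iet_X :: "nat \<Rightarrow> (nat \<Rightarrow> real) \<Rightarrow> (nat \<Rightarrow> nat) \<Rightarrow> (int \<Rightarrow> nat) set" where
  "iet_X n a \<tau> = closure (iet_X0 n a \<tau>)"

definition pos_asymptotic :: "(int \<Rightarrow> nat) \<Rightarrow> (int \<Rightarrow> nat) \<Rightarrow> bool" where
  "pos_asymptotic \<alpha> \<beta> \<longleftrightarrow> (\<exists>N::nat. \<forall>i. int N \<le> i \<longrightarrow> \<alpha> i = \<beta> i)"

definition neg_asymptotic :: "(int \<Rightarrow> nat) \<Rightarrow> (int \<Rightarrow> nat) \<Rightarrow> bool" where
  "neg_asymptotic \<alpha> \<beta> \<longleftrightarrow> (\<exists>N::nat. \<forall>i. i \<le> - int N \<longrightarrow> \<alpha> i = \<beta> i)"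

definition has_periodic_point :: "(real \<Rightarrow> real) \<Rightarrow> bool" where
  "has_periodic_point T \<longleftrightarrow> (\<exists>x\<in>{0..<1}. \<exists>k::nat. k \<ge> 1 \<and> (T ^^ k) x = x)"

end

theory Submission
  imports Defs
begin



definition mem :: "bool \<Rightarrow> real \<Rightarrow> real \<Rightarrow> real \<Rightarrow> bool" where
  "mem s lo hi x = (if s then lo \<le> x \<and> x < hi else lo < x \<and> x \<le> hi)"

definition betw :: "real \<Rightarrow> real \<Rightarrow> real \<Rightarrow> bool" where
  "betw u v z \<longleftrightarrow> min u v \<le> z \<and> z \<le> max u v"

lemma mem_conv: "mem s lo hi p \<Longrightarrow> mem s lo hi q \<Longrightarrow> betw p q w \<Longrightarrow> mem s lo hi w"
  unfolding mem_def betw_def by (cases s) (auto simp: min_def max_def split: if_splits)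

lemma mem_shift: "mem s lo hi (x + d) \<longleftrightarrow> mem s (lo - d) (hi - d) x"
  unfolding mem_def by auto

lemma mem_open: "lo < x \<Longrightarrow> x < hi \<Longrightarrow> mem s lo hi x"
  unfolding mem_def by auto

locale part =
  fixes n :: nat and c :: "nat \<Rightarrow> real"
  assumes step: "\<And>i. i < n \<Longrightarrow> c i < c (Suc i)"
    and c0: "c 0 = 0" and cn: "c n = 1"
begin

lemma less: "j \<le> n \<Longrightarrow> i < j \<Longrightarrow> c i < c j"
proof (induction j)
  case 0 then show ?case by simp
next
  case (Suc j)
  then show ?case using step[of j]
    by (cases "i = j") (auto simp: less_Suc_eq)
qed

lemma le: "j \<le> n \<Longrightarrow> i \<le> j \<Longrightarrow> c i \<le> c j"
  using less by (cases "i = j") (auto simp: order_le_less)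

lemma cover:
  assumes "mem s 0 1 x" shows "\<exists>i\<in>{1..n}. mem s (c (i - 1)) (c i) x"
proof (cases s)
  case True
  define i where "i = (LEAST i. x < c i)"
  have ex: "x < c n" using assms True cn by (simp add: mem_def)
  have xi: "x < c i" unfolding i_def by (rule LeastI[of _ n]) (rule ex)
  have ile: "i \<le> n" unfolding i_def by (rule Least_le) (rule ex)
  have i0: "i \<noteq> 0"
  proof
    assume "i = 0" with xi c0 have "x < 0" by simp
    with assms True show False by (simp add: mem_def)
  qed
  have "\<not> x < c (i - 1)" unfolding i_def
    by (rule not_less_Least) (use i0 in \<open>simp add: i_def\<close>)
  then show ?thesis using xi ile i0 True by (intro bexI[of _ i]) (auto simp: mem_def)
next
  case False
  define i where "i = (LEAST i. x \<le> c i)"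
  have ex: "x \<le> c n" using assms False cn by (simp add: mem_def)
  have xi: "x \<le> c i" unfolding i_def by (rule LeastI[of _ n]) (rule ex)
  have ile: "i \<le> n" unfolding i_def by (rule Least_le) (rule ex)
  have i0: "i \<noteq> 0"
  proof
    assume "i = 0" with xi c0 have "x \<le> 0" by simp
    with assms False show False by (simp add: mem_def)
  qed
  have "\<not> x \<le> c (i - 1)" unfolding i_def
    by (rule not_less_Least) (use i0 in \<open>simp add: i_def\<close>)
  then show ?thesis using xi ile i0 False by (intro bexI[of _ i]) (auto simp: mem_def)
qed

lemma unique:
  assumes "i \<in> {1..n}" "j \<in> {1..n}" "mem s (c (i - 1)) (c i) x" "mem s (c (j - 1)) (c j) x"
  shows "i = j"
proof (rule ccontr)
  assume "i \<noteq> j"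
  then consider "i < j" | "j < i" by linarith
  then show False
  proof cases
    case 1
    then have "c i \<le> c (j - 1)" using assms by (intro le) auto
    then show False using assms by (cases s) (auto simp: mem_def)
  next
    case 2
    then have "c j \<le> c (i - 1)" using assms by (intro le) auto
    then show False using assms by (cases s) (auto simp: mem_def)
  qed
qed

lemma inside:
  assumes "i \<in> {1..n}" "mem s (c (i - 1)) (c i) x" shows "mem s 0 1 x"
proof -
  have "c 0 \<le> c (i - 1)" "c i \<le> c n" using assms by (auto intro!: le)
  then show ?thesis using assms c0 cn by (cases s) (auto simp: mem_def)
qed

lemma sep:
  assumes "l1 \<in> {1..n}" "l2 \<in> {1..n}" "l1 \<noteq> l2"
    "mem s (c (l1 - 1)) (c l1) p" "mem s (c (l2 - 1)) (c l2) q"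
  shows "\<exists>l\<in>{1..n-1}. \<bar>p - c l\<bar> \<le> \<bar>p - q\<bar>"
proof -
  consider "l1 < l2" | "l2 < l1" using assms by linarith
  then show ?thesis
  proof cases
    case 1
    then have "c l1 \<le> c (l2 - 1)" using assms by (intro le) auto
    moreover have "l1 \<in> {1..n-1}" using assms 1 by auto
    ultimately show ?thesis using assms 1
      by (intro bexI[of _ l1]) (cases s; auto simp: mem_def)
  next
    case 2
    then have "c l2 \<le> c (l1 - 1)" using assms by (intro le) auto
    moreover have "l1 - 1 \<in> {1..n-1}" using assms 2 by auto
    ultimately show ?thesis using assms 2
      by (intro bexI[of _ "l1 - 1"]) (cases s; auto simp: mem_def)
  qed
qed

end



locale bijA =
  fixes f :: "real \<Rightarrow> real" and A :: "real set"
  assumes bij: "bij_betw f A A"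
begin

definition g where "g = inv_into A f"

lemma fA: "x \<in> A \<Longrightarrow> f x \<in> A" using bij by (auto simp: bij_betw_def)
lemma gA: "x \<in> A \<Longrightarrow> g x \<in> A" unfolding g_def using bij
  by (metis bij_betw_def inv_into_into)
lemma fg: "x \<in> A \<Longrightarrow> f (g x) = x" unfolding g_def using bij
  by (simp add: bij_betw_def f_inv_into_f)
lemma gf: "x \<in> A \<Longrightarrow> g (f x) = x" unfolding g_def using bij
  by (simp add: bij_betw_def)
lemma injf: "inj_on f A" using bij by (auto simp: bij_betw_def)
lemma injg: "inj_on g A" by (metis fg inj_onI)

lemma fpowA: "x \<in> A \<Longrightarrow> (f ^^ k) x \<in> A" by (induction k) (auto simp: fA)
lemma gpowA: "x \<in> A \<Longrightarrow> (g ^^ k) x \<in> A" by (induction k) (auto simp: gA)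

lemma fpow_gpow: "x \<in> A \<Longrightarrow> (f ^^ k) ((g ^^ k) x) = x"
proof (induction k arbitrary: x)
  case (Suc k)
  have "(f ^^ Suc k) ((g ^^ Suc k) x) = (f ^^ k) (f (g ((g ^^ k) x)))"
    by (simp add: funpow_swap1)
  also have "\<dots> = x" using Suc by (simp add: fg gpowA)
  finally show ?case .
qed simp

lemma inj_fpow: "inj_on (f ^^ k) A"
  by (induction k) (auto simp: inj_on_def fpowA dest: injf[THEN inj_onD])

abbreviation it where "it k x \<equiv> iter_int f A k x"

lemma it_A: "x \<in> A \<Longrightarrow> it k x \<in> A"
  by (simp add: iter_int_def fpowA gpowA[unfolded g_def])

lemma it_pos: "it (int k) x = (f ^^ k) x" by (simp add: iter_int_def)
lemma it_neg: "it (- int k) x = (g ^^ k) x" unfolding iter_int_def g_def by (cases "k = 0") auto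
lemma it_0: "it 0 x = x" by (simp add: iter_int_def)

lemma it_Suc: assumes "x \<in> A" shows "it (k + 1) x = f (it k x)"
proof (cases "0 \<le> k")
  case True
  then have "nat (k + 1) = Suc (nat k)" by simp
  then show ?thesis using True by (simp add: iter_int_def)
next
  case False
  then have e: "nat (- k) = Suc (nat (- (k + 1)))" by simp
  have "it k x = (g ^^ Suc (nat (- (k + 1)))) x" using False e by (simp add: iter_int_def g_def)
  also have "\<dots> = g ((g ^^ nat (- (k + 1))) x)" by simp
  finally have "f (it k x) = (g ^^ nat (- (k + 1))) x" using fg gpowA assms by simp
  then show ?thesis using False
    by (cases "k + 1 = 0") (auto simp: iter_int_def g_def)
qed

lemma it_pred: assumes "x \<in> A" shows "it (k - 1) x = g (it k x)"
proof -
  have "it k x = f (it (k - 1) x)" using it_Suc[OF assms, of "k - 1"] by simp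
  then show ?thesis using gf it_A assms by simp
qed

lemma it_add: assumes "x \<in> A" shows "it (i + j) x = it i (it j x)"
proof (induction i rule: int_induct[where k = 0])
  case base then show ?case by (simp add: it_0)
next
  case (step1 i)
  have "it (i + 1 + j) x = it ((i + j) + 1) x" by (simp add: ac_simps)
  also have "\<dots> = f (it (i + j) x)" using it_Suc assms by blast
  also have "\<dots> = f (it i (it j x))" using step1 by simp
  also have "\<dots> = it (i + 1) (it j x)" using it_Suc it_A assms by simp
  finally show ?case .
next
  case (step2 i)
  have "it (i - 1 + j) x = it ((i + j) - 1) x" by (simp add: algebra_simps)
  also have "\<dots> = g (it (i + j) x)" using it_pred assms by blast
  also have "\<dots> = g (it i (it j x))" using step2 by simp
  also have "\<dots> = it (i - 1) (it j x)" using it_pred it_A assms by simp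
  finally show ?case .
qed

lemma it_inv: "x \<in> A \<Longrightarrow> it (- k) (it k x) = x"
  using it_add[of x "-k" k] by (simp add: it_0)

end



lemma periodic_of_translation:
  fixes f :: "real \<Rightarrow> real" and t :: "nat \<Rightarrow> real"
  assumes A01: "A \<subseteq> {0..1}" and fA: "\<And>x. x \<in> A \<Longrightarrow> f x \<in> A" and inj: "inj_on f A"
    and lohi: "lo < hi" "{lo..hi} \<subseteq> A"
    and tr: "\<And>k z. z \<in> {lo..hi} \<Longrightarrow> (f ^^ k) z = z + t k"
  shows "\<exists>m\<ge>1. (f ^^ m) lo = lo"
proof (rule ccontr)
  assume nper: "\<not> ?thesis"
  define L where "L = hi - lo"
  have L0: "L > 0" using lohi by (simp add: L_def)
  have fpowA: "x \<in> A \<Longrightarrow> (f ^^ k) x \<in> A" for x k by (induction k) (auto simp: fA)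
  have injp: "inj_on (f ^^ k) A" for k
    by (induction k) (auto simp: inj_on_def fpowA dest: inj[THEN inj_onD])
  have loin: "lo \<in> {lo..hi}" "hi \<in> {lo..hi}" using lohi by auto
  define p where "p k = (f ^^ k) lo" for k
  have tp: "t k = p k - lo" for k using tr[OF loin(1), of k] by (simp add: p_def)
  have pA: "p k \<in> A" for k using fpowA lohi loin unfolding p_def by blast
  have p01: "0 \<le> p k \<and> p k \<le> 1" for k using pA[of k] A01 by auto
  define B where "B = nat \<lfloor>1 / L\<rfloor>"
  define h where "h k = nat \<lfloor>p k / L\<rfloor>" for k
  have hB: "h k \<in> {0..B}" for k
  proof -
    have "p k / L \<le> 1 / L" using p01 L0 by (simp add: divide_right_mono)
    then show ?thesis unfolding h_def B_def by (auto intro!: nat_mono floor_mono)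
  qed
  have "\<not> inj_on h {0..B+1}"
  proof (rule pigeonhole)
    have "h ` {0..B+1} \<subseteq> {0..B}" using hB by auto
    then have "card (h ` {0..B+1}) \<le> card {0..B}" by (intro card_mono) auto
    then show "card (h ` {0..B+1}) < card {0..B+1}" by simp
  qed
  then obtain j k where jk: "j < k" "h j = h k"
    unfolding inj_on_def by (metis linorder_neqE_nat)
  have fl: "\<lfloor>p j / L\<rfloor> = \<lfloor>p k / L\<rfloor>"
  proof -
    have "0 \<le> p j / L" "0 \<le> p k / L" using p01 L0 by auto
    then show ?thesis using jk(2) unfolding h_def by (simp add: nat_eq_iff2)
  qed
  have "\<bar>p k / L - p j / L\<bar> < 1"
    using fl floor_le_iff[of "p k / L"] floor_correct[of "p k / L"] floor_correct[of "p j / L"]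
    by linarith
  then have close: "\<bar>p k - p j\<bar> < L"
    using L0 by (simp add: diff_divide_distrib[symmetric] abs_divide)
  define s where "s = p k - p j"
  define m where "m = k - j"
  have m1: "m \<ge> 1" using jk by (simp add: m_def)
  obtain a b where ab: "a \<in> {lo..hi}" "b \<in> {lo..hi}" "a - b = s"
  proof (cases "s \<ge> 0")
    case True then show ?thesis using that[of "lo + s" lo] close lohi by (auto simp: s_def L_def)
  next
    case False then show ?thesis using that[of lo "lo - s"] close lohi by (auto simp: s_def L_def)
  qed
  have "(f ^^ j) a = (f ^^ k) b" using tr[OF ab(1)] tr[OF ab(2)] ab(3) tp s_def by simp
  also have "(f ^^ k) b = (f ^^ j) ((f ^^ m) b)"
  proof -
    have "k = j + m" using jk by (simp add: m_def)
    then show ?thesis by (simp add: funpow_add)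
  qed
  finally have "a = (f ^^ m) b"
    using injp[of j] ab lohi fpowA by (meson inj_on_def subsetD)
  then have tm: "t m = s" using tr[OF ab(2)] ab(3) by simp
  have s0: "s \<noteq> 0"
  proof
    assume "s = 0"
    then have "(f ^^ m) lo = lo" using tm tp[of m] by (simp add: p_def)
    then show False using nper m1 by blast
  qed
  obtain a0 where a0: "a0 \<in> {lo..hi}" "a0 + s \<in> {lo..hi}"
  proof (cases "s \<ge> 0")
    case True then show ?thesis using that[of lo] close lohi by (auto simp: s_def L_def)
  next
    case False then show ?thesis using that[of hi] close lohi by (auto simp: s_def L_def)
  qed
  have trm: "t (r * m) = real r * s" for r
  proof (induction r)
    case 0 then show ?case using tp by (simp add: p_def)
  next
    case (Suc r)
    have "(f ^^ (Suc r * m)) a0 = (f ^^ (r * m)) ((f ^^ m) a0)"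
      by (metis (no_types) comp_apply funpow_add mult_Suc add.commute)
    also have "\<dots> = a0 + s + t (r * m)" using tr[OF a0(1), of m] tr[OF a0(2)] tm by simp
    finally show ?case using tr[OF a0(1)] Suc by (simp add: algebra_simps)
  qed
  define r where "r = nat \<lceil>2 / \<bar>s\<bar>\<rceil>"
  have "real r \<ge> 2 / \<bar>s\<bar>" unfolding r_def by linarith
  then have "real r * \<bar>s\<bar> \<ge> 2" using s0 by (simp add: field_simps)
  moreover have "\<bar>t (r * m)\<bar> \<le> 1" using tp p01[of "r * m"] p01[of 0] by (simp add: p_def) linarith
  ultimately show False using trm[of r] by (simp add: abs_mult)
qed




locale ietl =
  fixes n :: nat and b bt :: "nat \<Rightarrow> real" and \<tau> :: "nat \<Rightarrow> nat"
  assumes pb: "part n b" and pbt: "part n bt" and perm: "\<tau> permutes {1..n}"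
    and len: "\<And>i. i \<in> {1..n} \<Longrightarrow> bt (\<tau> i) - bt (\<tau> i - 1) = b i - b (i - 1)"
begin

definition A :: "bool \<Rightarrow> real set" where "A s = {x. mem s 0 1 x}"
definition idx :: "bool \<Rightarrow> real \<Rightarrow> nat" where
  "idx s x = (THE i. i \<in> {1..n} \<and> mem s (b (i - 1)) (b i) x)"
definition cc :: "nat \<Rightarrow> real" where "cc i = bt (\<tau> i - 1) - b (i - 1)"
definition F :: "bool \<Rightarrow> real \<Rightarrow> real" where "F s x = x + cc (idx s x)"

lemma tau_in: "i \<in> {1..n} \<Longrightarrow> \<tau> i \<in> {1..n}" by (simp only: permutes_in_image[OF perm])
lemma tau_inj: "i \<in> {1..n} \<Longrightarrow> j \<in> {1..n} \<Longrightarrow> \<tau> i = \<tau> j \<Longrightarrow> i = j"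
  using perm by (metis permutes_inj inj_eq)
lemma tau_surj: "l \<in> {1..n} \<Longrightarrow> \<exists>i\<in>{1..n}. \<tau> i = l"
  using perm by (metis permutes_inverses(1) permutes_inv permutes_in_image)

lemma idx_eq: "i \<in> {1..n} \<Longrightarrow> mem s (b (i - 1)) (b i) x \<Longrightarrow> idx s x = i"
  unfolding idx_def by (rule the_equality) (auto intro: part.unique[OF pb])

lemma idx_mem: assumes "x \<in> A s"
  shows "idx s x \<in> {1..n}" "mem s (b (idx s x - 1)) (b (idx s x)) x"
proof -
  have "mem s 0 1 x" using assms by (simp add: A_def)
  then obtain i where i: "i \<in> {1..n}" "mem s (b (i - 1)) (b i) x"
    using part.cover[OF pb] by blast
  then show "idx s x \<in> {1..n}" "mem s (b (idx s x - 1)) (b (idx s x)) x"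
    using idx_eq[OF i] by auto
qed

lemma memA: "i \<in> {1..n} \<Longrightarrow> mem s (b (i - 1)) (b i) x \<Longrightarrow> x \<in> A s"
  using part.inside[OF pb] by (auto simp: A_def)

lemma F_img: assumes "x \<in> A s"
  shows "mem s (bt (\<tau> (idx s x) - 1)) (bt (\<tau> (idx s x))) (F s x)"
proof -
  let ?i = "idx s x"
  have "mem s (b (?i - 1)) (b ?i) x" by (rule idx_mem(2)[OF assms])
  moreover have "bt (\<tau> ?i) = bt (\<tau> ?i - 1) + b ?i - b (?i - 1)" using len[OF idx_mem(1)[OF assms]] by simp
  ultimately show ?thesis unfolding F_def cc_def mem_shift by (simp add: algebra_simps)
qed

lemma F_A: assumes "x \<in> A s" shows "F s x \<in> A s"
proof -
  have "mem s 0 1 (F s x)"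
    by (rule part.inside[OF pbt tau_in[OF idx_mem(1)[OF assms]] F_img[OF assms]])
  then show ?thesis by (simp add: A_def)
qed

lemma F_inj: "inj_on (F s) (A s)"
proof (rule inj_onI)
  fix x y assume xy: "x \<in> A s" "y \<in> A s" "F s x = F s y"
  have "\<tau> (idx s x) = \<tau> (idx s y)"
    using part.unique[OF pbt tau_in[OF idx_mem(1)[OF xy(1)]] tau_in[OF idx_mem(1)[OF xy(2)]]
        F_img[OF xy(1)]] F_img[OF xy(2)] xy(3) by simp
  then have "idx s x = idx s y" using tau_inj idx_mem(1) xy by blast
  then show "x = y" using xy(3) by (simp add: F_def)
qed

lemma F_surj: assumes "q \<in> A s" shows "\<exists>x\<in>A s. F s x = q"
proof -
  have "mem s 0 1 q" using assms by (simp add: A_def)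
  then obtain l where l: "l \<in> {1..n}" "mem s (bt (l - 1)) (bt l) q"
    using part.cover[OF pbt] by blast
  obtain i where i: "i \<in> {1..n}" "\<tau> i = l" using tau_surj[OF l(1)] by blast
  define x where "x = q - cc i"
  have "mem s (b (i - 1)) (b i) x"
    using l(2) len[OF i(1)] i(2) unfolding x_def cc_def mem_def by (cases s) auto
  then have "x \<in> A s" "idx s x = i" using memA idx_eq i(1) by auto
  then show ?thesis by (intro bexI[of _ x]) (auto simp: F_def x_def)
qed

lemma F_bij: "bij_betw (F s) (A s) (A s)"
  unfolding bij_betw_def using F_inj F_A F_surj by blast

lemma bijA: "bijA (F s) (A s)" by unfold_locales (rule F_bij)

definition G :: "bool \<Rightarrow> real \<Rightarrow> real" where "G s = inv_into (A s) (F s)"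

lemma G_A: "x \<in> A s \<Longrightarrow> G s x \<in> A s" using bijA.gA[OF bijA] by (simp add: G_def bijA.g_def[OF bijA])
lemma FG: "x \<in> A s \<Longrightarrow> F s (G s x) = x" using bijA.fg[OF bijA] by (simp add: G_def bijA.g_def[OF bijA])
lemma GF: "x \<in> A s \<Longrightarrow> G s (F s x) = x" using bijA.gf[OF bijA] by (simp add: G_def bijA.g_def[OF bijA])
lemma FpowA: "x \<in> A s \<Longrightarrow> (F s ^^ k) x \<in> A s" by (induction k) (auto simp: F_A)
lemma GpowA: "x \<in> A s \<Longrightarrow> (G s ^^ k) x \<in> A s" by (induction k) (auto simp: G_A)

lemma A_conv: "u \<in> A s \<Longrightarrow> v \<in> A s \<Longrightarrow> betw u v z \<Longrightarrow> z \<in> A s"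
  unfolding A_def using mem_conv by blast

lemma betw_shift: "betw (u + d) (v + d) (z + d) \<longleftrightarrow> betw u v z"
  unfolding betw_def by (auto simp: min_def max_def)

lemma fwd_fin:
  assumes uv: "u \<in> A s" "v \<in> A s"
    and eq: "\<And>k. k < K \<Longrightarrow> idx s ((F s ^^ k) u) = idx s ((F s ^^ k) v)"
  shows "k \<le> K \<Longrightarrow> betw u v z \<Longrightarrow> (F s ^^ k) z = z + ((F s ^^ k) u - u)"
proof (induction k arbitrary: z)
  case 0 then show ?case by simp
next
  case (Suc k)
  define d where "d = (F s ^^ k) u - u"
  have zk: "(F s ^^ k) z = z + d" using Suc by (simp add: d_def)
  have vk: "(F s ^^ k) v = v + d" using Suc.IH[of v] Suc.prems by (simp add: d_def betw_def)
  have uk: "(F s ^^ k) u = u + d" by (simp add: d_def)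
  define i where "i = idx s ((F s ^^ k) u)"
  have ui: "i \<in> {1..n}" "mem s (b (i - 1)) (b i) ((F s ^^ k) u)"
    using idx_mem[OF FpowA[OF uv(1)], of k] unfolding i_def by auto
  have vi: "mem s (b (i - 1)) (b i) ((F s ^^ k) v)"
    using idx_mem(2)[OF FpowA[OF uv(2)], of k] eq[of k] Suc.prems by (simp add: i_def)
  have "betw ((F s ^^ k) u) ((F s ^^ k) v) ((F s ^^ k) z)"
    using uk vk zk Suc.prems betw_shift by simp
  then have zi: "mem s (b (i - 1)) (b i) ((F s ^^ k) z)" using mem_conv ui vi by blast
  have "idx s ((F s ^^ k) z) = i" using idx_eq[OF ui(1) zi] .
  then have "(F s ^^ Suc k) z = z + d + cc i" using zk by (simp add: F_def)
  moreover have "(F s ^^ Suc k) u = u + d + cc i" using uk by (simp add: F_def i_def)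
  ultimately show ?case by simp
qed

lemma bwd_fin:
  assumes uv: "u \<in> A s" "v \<in> A s"
    and eq: "\<And>k. 1 \<le> k \<Longrightarrow> k \<le> K \<Longrightarrow> idx s ((G s ^^ k) u) = idx s ((G s ^^ k) v)"
  shows "k \<le> K \<Longrightarrow> betw u v z \<Longrightarrow> (G s ^^ k) z = z + ((G s ^^ k) u - u)"
proof (induction k arbitrary: z)
  case 0 then show ?case by simp
next
  case (Suc k)
  define d where "d = (G s ^^ k) u - u"
  have zk: "(G s ^^ k) z = z + d" using Suc by (simp add: d_def)
  have vk: "(G s ^^ k) v = v + d" using Suc.IH[of v] Suc.prems by (simp add: d_def betw_def)
  have uk: "(G s ^^ k) u = u + d" by (simp add: d_def)
  define i where "i = idx s ((G s ^^ Suc k) u)"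
  have ui: "i \<in> {1..n}" "mem s (b (i - 1)) (b i) ((G s ^^ Suc k) u)"
    using idx_mem[OF GpowA[OF uv(1)], of "Suc k"] unfolding i_def by auto
  have vi: "mem s (b (i - 1)) (b i) ((G s ^^ Suc k) v)"
    using idx_mem(2)[OF GpowA[OF uv(2)], of "Suc k"] eq[of "Suc k"] Suc.prems by (simp add: i_def)
  have Fu: "(G s ^^ Suc k) u = (G s ^^ k) u - cc i"
  proof -
    have "F s ((G s ^^ Suc k) u) = (G s ^^ k) u" using FG GpowA uv by simp
    then show ?thesis by (simp add: F_def i_def)
  qed
  have Fv: "(G s ^^ Suc k) v = (G s ^^ k) v - cc i"
  proof -
    have "F s ((G s ^^ Suc k) v) = (G s ^^ k) v" using FG GpowA uv by simp
    moreover have "idx s ((G s ^^ Suc k) v) = i" using idx_eq[OF ui(1) vi] .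
    ultimately show ?thesis by (simp add: F_def)
  qed
  define q where "q = z + d - cc i"
  have e1: "(G s ^^ Suc k) u = u + (d - cc i)" using Fu uk by simp
  have e2: "(G s ^^ Suc k) v = v + (d - cc i)" using Fv vk by simp
  have "betw (u + (d - cc i)) (v + (d - cc i)) (z + (d - cc i))" using betw_shift Suc.prems by blast
  then have "betw ((G s ^^ Suc k) u) ((G s ^^ Suc k) v) q"
    unfolding e1 e2 q_def by (simp add: algebra_simps)
  then have qi: "mem s (b (i - 1)) (b i) q" using mem_conv ui vi by blast
  then have "q \<in> A s" "idx s q = i" using memA idx_eq ui(1) by auto
  then have "F s q = (G s ^^ k) z" using zk by (simp add: F_def q_def)
  then have "(G s ^^ Suc k) z = q" using GF \<open>q \<in> A s\<close> by (metis funpow.simps(2) comp_apply)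
  then show ?case using Fu uk by (simp add: q_def)
qed

end



context ietl begin

lemma A01: "A s \<subseteq> {0..1}" unfolding A_def mem_def by (cases s) auto

lemma A_ivl: assumes "lo \<in> A s" "hi \<in> A s" "lo \<le> hi" shows "{lo..hi} \<subseteq> A s"
proof
  fix z assume "z \<in> {lo..hi}"
  then have "betw lo hi z" using assms(3) by (simp add: betw_def)
  then show "z \<in> A s" using A_conv[OF assms(1,2)] by blast
qed

lemma G_inj: "inj_on (G s) (A s)" using bijA.injg[OF bijA] by (simp add: G_def bijA.g_def[OF bijA])

lemma FG_pow: "x \<in> A s \<Longrightarrow> (F s ^^ k) ((G s ^^ k) x) = x"
  using bijA.fpow_gpow[OF bijA] by (simp add: G_def bijA.g_def[OF bijA])

lemma fwd_tr:
  assumes "u \<in> A s" "v \<in> A s" "u \<le> v" "\<And>k. idx s ((F s ^^ k) u) = idx s ((F s ^^ k) v)"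
  shows "z \<in> {u..v} \<Longrightarrow> (F s ^^ k) z = z + ((F s ^^ k) u - u)"
  using fwd_fin[OF assms(1,2), of "Suc k" k z] assms(3,4) by (auto simp: betw_def)

lemma bwd_tr:
  assumes "u \<in> A s" "v \<in> A s" "u \<le> v" "\<And>k. 1 \<le> k \<Longrightarrow> idx s ((G s ^^ k) u) = idx s ((G s ^^ k) v)"
  shows "z \<in> {u..v} \<Longrightarrow> (G s ^^ k) z = z + ((G s ^^ k) u - u)"
  using bwd_fin[OF assms(1,2), of "Suc k" k z] assms(3,4) by (auto simp: betw_def)

lemma open_eq:
  assumes "i \<in> {1..n}" "b (i - 1) < q" "q < b i"
  shows "idx True q = i" "idx False q = i" "F True q = F False q" "q \<in> A True" "q \<in> A False"
proof -
  have m: "mem s (b (i - 1)) (b i) q" for s using assms mem_open by blast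
  show i1: "idx True q = i" "idx False q = i" using idx_eq[OF assms(1) m] by auto
  show "F True q = F False q" using i1 by (simp add: F_def)
  show "q \<in> A True" "q \<in> A False" using memA[OF assms(1) m] by auto
qed

context
  assumes noper: "\<not> (\<exists>x\<in>A True. \<exists>k\<ge>1. (F True ^^ k) x = x)"
begin

lemma no_fwd_T:
  assumes "u \<in> A True" "v \<in> A True" "u < v" "\<And>k. idx True ((F True ^^ k) u) = idx True ((F True ^^ k) v)"
  shows False
proof -
  have tr: "\<And>k z. z \<in> {u..v} \<Longrightarrow> (F True ^^ k) z = z + ((F True ^^ k) u - u)"
    by (rule fwd_tr[OF assms(1,2) less_imp_le[OF assms(3)] assms(4)])
  have "\<exists>m\<ge>1. (F True ^^ m) u = u"
    by (rule periodic_of_translation[OF A01 _ F_inj assms(3) A_ivl[OF assms(1,2) less_imp_le[OF assms(3)]] tr]) (rule F_A)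
  then show False using noper assms(1) by blast
qed

lemma no_bwd_T:
  assumes "u \<in> A True" "v \<in> A True" "u < v" "\<And>k. 1 \<le> k \<Longrightarrow> idx True ((G True ^^ k) u) = idx True ((G True ^^ k) v)"
  shows False
proof -
  have tr: "\<And>k z. z \<in> {u..v} \<Longrightarrow> (G True ^^ k) z = z + ((G True ^^ k) u - u)"
    by (rule bwd_tr[OF assms(1,2) less_imp_le[OF assms(3)] assms(4)])
  have "\<exists>m\<ge>1. (G True ^^ m) u = u"
    by (rule periodic_of_translation[OF A01 _ G_inj assms(3) A_ivl[OF assms(1,2) less_imp_le[OF assms(3)]] tr]) (rule G_A)
  then obtain m where "m \<ge> 1" "(G True ^^ m) u = u" by blast
  then have "(F True ^^ m) u = u" using FG_pow[OF assms(1), of m] by simp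
  then show False using noper assms(1) \<open>m \<ge> 1\<close> by blast
qed

lemma no_fwd_F:
  assumes uv: "u \<in> A False" "v \<in> A False" "u < v"
    and eq: "\<And>k. idx False ((F False ^^ k) u) = idx False ((F False ^^ k) v)"
  shows False
proof -
  define t where "t k = (F False ^^ k) u - u" for k
  have tr: "z \<in> {u..v} \<Longrightarrow> (F False ^^ k) z = z + t k" for z k
    unfolding t_def by (rule fwd_tr[OF uv(1,2) less_imp_le[OF uv(3)] eq])
  have agree: "z \<in> {u<..<v} \<Longrightarrow> (F True ^^ k) z = (F False ^^ k) z" for k z
  proof (induction k)
    case 0 then show ?case by simp
  next
    case (Suc k)
    define i where "i = idx False ((F False ^^ k) u)"
    have ui: "i \<in> {1..n}" "mem False (b (i - 1)) (b i) ((F False ^^ k) u)"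
      using idx_mem[OF FpowA[OF uv(1)], of k] unfolding i_def by auto
    have vi: "mem False (b (i - 1)) (b i) ((F False ^^ k) v)"
      using idx_mem(2)[OF FpowA[OF uv(2)], of k] eq[of k] by (simp add: i_def)
    have "(F False ^^ k) u = u + t k" "(F False ^^ k) v = v + t k" "(F False ^^ k) z = z + t k"
      using tr Suc.prems uv(3) by auto
    then have "b (i - 1) < (F False ^^ k) z" "(F False ^^ k) z < b i"
      using ui vi Suc.prems by (auto simp: mem_def)
    then have "F True ((F False ^^ k) z) = F False ((F False ^^ k) z)" using open_eq(3) ui(1) by blast
    then show ?case using Suc by simp
  qed
  define lo where "lo = u + (v - u) / 3"
  define hi where "hi = v - (v - u) / 3"
  have lohi: "lo < hi" "u < lo" "hi < v" using uv(3) unfolding lo_def hi_def by (auto simp: field_simps)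
  have sub: "{lo..hi} \<subseteq> A True"
    using A01[of False] uv lohi by (auto simp: A_def mem_def)
  have tr2: "\<And>k z. z \<in> {lo..hi} \<Longrightarrow> (F True ^^ k) z = z + t k"
  proof -
    fix k z assume z: "z \<in> {lo..hi}"
    then have "z \<in> {u<..<v}" "z \<in> {u..v}" using lohi by auto
    then show "(F True ^^ k) z = z + t k" using agree tr by metis
  qed
  have "\<exists>m\<ge>1. (F True ^^ m) lo = lo"
    by (rule periodic_of_translation[OF A01 _ F_inj lohi(1) sub tr2]) (rule F_A)
  moreover have "lo \<in> A True" using sub lohi by auto
  ultimately show False using noper by blast
qed

lemma no_bwd_F:
  assumes uv: "u \<in> A False" "v \<in> A False" "u < v"
    and eq: "\<And>k. 1 \<le> k \<Longrightarrow> idx False ((G False ^^ k) u) = idx False ((G False ^^ k) v)"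
  shows False
proof -
  define t where "t k = (G False ^^ k) u - u" for k
  have tr: "z \<in> {u..v} \<Longrightarrow> (G False ^^ k) z = z + t k" for z k
    unfolding t_def by (rule bwd_tr[OF uv(1,2) less_imp_le[OF uv(3)] eq])
  have agree: "z \<in> {u<..<v} \<Longrightarrow> (G True ^^ k) z = (G False ^^ k) z" for k z
  proof (induction k)
    case 0 then show ?case by simp
  next
    case (Suc k)
    have zA: "z \<in> A False" using A_ivl[OF uv(1,2)] uv(3) Suc.prems by auto
    define i where "i = idx False ((G False ^^ Suc k) u)"
    have ui: "i \<in> {1..n}" "mem False (b (i - 1)) (b i) ((G False ^^ Suc k) u)"
      using idx_mem[OF GpowA[OF uv(1)], of "Suc k"] unfolding i_def by auto
    have vi: "mem False (b (i - 1)) (b i) ((G False ^^ Suc k) v)"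
      using idx_mem(2)[OF GpowA[OF uv(2)], of "Suc k"] eq[of "Suc k"] by (simp add: i_def)
    define q where "q = (G False ^^ Suc k) z"
    have "(G False ^^ Suc k) u = u + t (Suc k)" "(G False ^^ Suc k) v = v + t (Suc k)" "q = z + t (Suc k)"
      using tr[of u "Suc k"] tr[of v "Suc k"] tr[of z "Suc k"] Suc.prems uv(3)
      by (auto simp: q_def simp del: funpow.simps)
    then have qb: "b (i - 1) < q" "q < b i"
      using ui vi Suc.prems by (auto simp: mem_def)
    define w where "w = (G False ^^ k) z"
    have wA: "w \<in> A False" using GpowA zA by (simp add: w_def)
    have "F True q = F False q" using open_eq(3)[OF ui(1) qb] .
    also have "\<dots> = w" using FG[OF wA] by (simp add: q_def w_def)
    finally have "G True w = q" using GF open_eq(4)[OF ui(1) qb] by metis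
    then show ?case using Suc by (simp add: q_def w_def)
  qed
  define lo where "lo = u + (v - u) / 3"
  define hi where "hi = v - (v - u) / 3"
  have lohi: "lo < hi" "u < lo" "hi < v" using uv(3) unfolding lo_def hi_def by (auto simp: field_simps)
  have sub: "{lo..hi} \<subseteq> A True"
    using A01[of False] uv lohi by (auto simp: A_def mem_def)
  have tr2: "\<And>k z. z \<in> {lo..hi} \<Longrightarrow> (G True ^^ k) z = z + t k"
  proof -
    fix k z assume z: "z \<in> {lo..hi}"
    then have "z \<in> {u<..<v}" "z \<in> {u..v}" using lohi by auto
    then show "(G True ^^ k) z = z + t k" using agree tr by metis
  qed
  have "\<exists>m\<ge>1. (G True ^^ m) lo = lo"
    by (rule periodic_of_translation[OF A01 _ G_inj lohi(1) sub tr2]) (rule G_A)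
  then obtain m where "m \<ge> 1" "(G True ^^ m) lo = lo" by blast
  moreover have "lo \<in> A True" using sub lohi by auto
  ultimately have "(F True ^^ m) lo = lo" using FG_pow[of lo True m] by simp
  then show False using noper \<open>lo \<in> A True\<close> \<open>m \<ge> 1\<close> by blast
qed

end
end



lemma side_lemma:
  fixes f :: "real \<Rightarrow> real"
  assumes A01: "A \<subseteq> {0..1}" and fA: "\<And>x. x \<in> A \<Longrightarrow> f x \<in> A" and inj: "inj_on f A"
    and conv: "\<And>u v z. u \<in> A \<Longrightarrow> v \<in> A \<Longrightarrow> betw u v z \<Longrightarrow> z \<in> A"
    and pA: "p \<in> A" and d0: "\<delta> > 0"
    and H: "\<And>K. \<exists>q\<in>A. \<delta> \<le> \<bar>p - q\<bar> \<and> (\<forall>k\<le>K. \<forall>z. betw p q z \<longrightarrow> (f ^^ k) z = z + ((f ^^ k) p - p))"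
  shows "\<exists>lo\<in>A. \<exists>m\<ge>1. (f ^^ m) lo = lo"
proof -
  define t where "t k = (f ^^ k) p - p" for k
  define P1 where "P1 K \<longleftrightarrow> p + \<delta> \<in> A \<and> (\<forall>k\<le>K. \<forall>z\<in>{p..p+\<delta>}. (f ^^ k) z = z + t k)" for K
  define P2 where "P2 K \<longleftrightarrow> p - \<delta> \<in> A \<and> (\<forall>k\<le>K. \<forall>z\<in>{p-\<delta>..p}. (f ^^ k) z = z + t k)" for K
  have P12: "P1 K \<or> P2 K" for K
  proof -
    obtain q where q: "q \<in> A" "\<delta> \<le> \<bar>p - q\<bar>"
      "\<And>k z. k \<le> K \<Longrightarrow> betw p q z \<Longrightarrow> (f ^^ k) z = z + t k"
      using H[of K] unfolding t_def by blast
    show ?thesis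
    proof (cases "p \<le> q")
      case True
      then have "q \<ge> p + \<delta>" using q(2) by linarith
      then have bz: "z \<in> {p..p+\<delta>} \<Longrightarrow> betw p q z" for z by (auto simp: betw_def)
      have "p + \<delta> \<in> A" using conv[OF pA q(1) bz] d0 by auto
      then show ?thesis using q(3) bz unfolding P1_def by blast
    next
      case False
      then have "q \<le> p - \<delta>" using q(2) by linarith
      then have bz: "z \<in> {p-\<delta>..p} \<Longrightarrow> betw p q z" for z by (auto simp: betw_def)
      have "p - \<delta> \<in> A" using conv[OF pA q(1) bz] d0 by auto
      then show ?thesis using q(3) bz unfolding P2_def by blast
    qed
  qed
  have mono1: "P1 K \<Longrightarrow> K' \<le> K \<Longrightarrow> P1 K'" for K K' unfolding P1_def by auto
  have mono2: "P2 K \<Longrightarrow> K' \<le> K \<Longrightarrow> P2 K'" for K K' unfolding P2_def by auto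
  have "(\<forall>K. P1 K) \<or> (\<forall>K. P2 K)"
  proof (rule ccontr)
    assume "\<not> ?thesis"
    then obtain K1 K2 where "\<not> P1 K1" "\<not> P2 K2" by blast
    then have "\<not> P1 (max K1 K2)" "\<not> P2 (max K1 K2)" using mono1 mono2 by (meson max.cobounded1 max.cobounded2)+
    then show False using P12 by blast
  qed
  then show ?thesis
  proof
    assume all: "\<forall>K. P1 K"
    then have pd: "p + \<delta> \<in> A" unfolding P1_def by blast
    have sub: "{p..p+\<delta>} \<subseteq> A" using conv[OF pA pd] by (auto simp: betw_def)
    have tr: "\<And>k z. z \<in> {p..p+\<delta>} \<Longrightarrow> (f ^^ k) z = z + t k" using all unfolding P1_def by blast
    have "\<exists>m\<ge>1. (f ^^ m) p = p"
      by (rule periodic_of_translation[OF A01 _ inj _ sub tr]) (use fA d0 in auto)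
    then show ?thesis using pA by blast
  next
    assume all: "\<forall>K. P2 K"
    then have pd: "p - \<delta> \<in> A" unfolding P2_def by blast
    have sub: "{p-\<delta>..p} \<subseteq> A" using conv[OF pd pA] by (auto simp: betw_def)
    have tr: "\<And>k z. z \<in> {p-\<delta>..p} \<Longrightarrow> (f ^^ k) z = z + t k" using all unfolding P2_def by blast
    have "\<exists>m\<ge>1. (f ^^ m) (p - \<delta>) = p - \<delta>"
      by (rule periodic_of_translation[OF A01 _ inj _ sub tr]) (use fA d0 in auto)
    then show ?thesis using pd by blast
  qed
qed

lemma closure_window:
  fixes \<beta> :: "int \<Rightarrow> nat" and S :: "(int \<Rightarrow> nat) set"
  assumes "\<beta> \<in> closure S"
  shows "\<exists>\<gamma>\<in>S. \<forall>i\<in>{lo..hi}. \<gamma> i = \<beta> i"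
proof -
  define U where "U = (\<Inter>i\<in>{lo..hi}. (\<lambda>\<gamma>::int\<Rightarrow>nat. \<gamma> i) -` {\<beta> i})"
  have "open U" unfolding U_def
    by (intro open_INT finite_atLeastAtMost ballI open_vimage continuous_on_product_coordinates)
       (simp add: open_discrete)
  moreover have "\<beta> \<in> U" by (simp add: U_def)
  ultimately have "U \<inter> S \<noteq> {}" using assms open_Int_closure_eq_empty by blast
  then show ?thesis by (auto simp: U_def)
qed




context ietl begin

lemma g_eq: "bijA.g (F s) (A s) = G s" by (simp add: bijA.g_def[OF bijA] G_def)

context
  assumes noper: "\<not> (\<exists>x\<in>A True. \<exists>k\<ge>1. (F True ^^ k) x = x)"
begin

lemma no_fwd_any:
  assumes "u \<in> A s" "v \<in> A s" "u \<noteq> v" "\<And>k. idx s ((F s ^^ k) u) = idx s ((F s ^^ k) v)"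
  shows False
proof (cases "u < v")
  case True
  show ?thesis
  proof (cases s)
    case True
    then have "s = True" by simp
    then show ?thesis using assms \<open>u < v\<close> no_fwd_T[OF noper, of u v] by simp
  next
    case False
    then have "s = False" by simp
    then show ?thesis using assms \<open>u < v\<close> no_fwd_F[OF noper, of u v] by simp
  qed
next
  case False
  then have "v < u" using assms(3) by auto
  show ?thesis
  proof (cases s)
    case True
    then have "s = True" by simp
    then show ?thesis using assms \<open>v < u\<close> no_fwd_T[OF noper, of v u] by simp
  next
    case False
    then have "s = False" by simp
    then show ?thesis using assms \<open>v < u\<close> no_fwd_F[OF noper, of v u] by simp
  qed
qed

lemma no_bwd_any:
  assumes "u \<in> A s" "v \<in> A s" "u \<noteq> v" "\<And>k. 1 \<le> k \<Longrightarrow> idx s ((G s ^^ k) u) = idx s ((G s ^^ k) v)"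
  shows False
proof (cases "u < v")
  case True
  show ?thesis
  proof (cases s)
    case True
    then have "s = True" by simp
    then show ?thesis using assms \<open>u < v\<close> no_bwd_T[OF noper, of u v] by simp
  next
    case False
    then have "s = False" by simp
    then show ?thesis using assms \<open>u < v\<close> no_bwd_F[OF noper, of u v] by simp
  qed
next
  case False
  then have "v < u" using assms(3) by auto
  show ?thesis
  proof (cases s)
    case True
    then have "s = True" by simp
    then show ?thesis using assms \<open>v < u\<close> no_bwd_T[OF noper, of v u] by simp
  next
    case False
    then have "s = False" by simp
    then show ?thesis using assms \<open>v < u\<close> no_bwd_F[OF noper, of v u] by simp
  qed
qed

lemma part12:
  assumes xy: "x \<in> A s" "y \<in> A s" "x \<noteq> y"
  shows "\<not> pos_asymptotic (\<lambda>k. idx s (iter_int (F s) (A s) k x)) (\<lambda>k. idx s (iter_int (F s) (A s) k y))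
       \<and> \<not> neg_asymptotic (\<lambda>k. idx s (iter_int (F s) (A s) k x)) (\<lambda>k. idx s (iter_int (F s) (A s) k y))"
proof -
  interpret B: bijA "F s" "A s" by (rule bijA)
  have ne: "B.it j x \<noteq> B.it j y" for j using xy B.it_inv by metis
  show ?thesis
  proof
    show "\<not> pos_asymptotic (\<lambda>k. idx s (B.it k x)) (\<lambda>k. idx s (B.it k y))"
    proof
      assume "pos_asymptotic (\<lambda>k. idx s (B.it k x)) (\<lambda>k. idx s (B.it k y))"
      then obtain N where N: "\<And>i. int N \<le> i \<Longrightarrow> idx s (B.it i x) = idx s (B.it i y)"
        unfolding pos_asymptotic_def by blast
      define u where "u = B.it (int N) x"
      define v where "v = B.it (int N) y"
      have e: "(F s ^^ k) (B.it (int N) w) = B.it (int k + int N) w" if "w \<in> A s" for w k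
        using B.it_add[OF that, of "int k" "int N"] B.it_pos by simp
      show False
      proof (rule no_fwd_any[of u s v])
        show "u \<in> A s" "v \<in> A s" using B.it_A xy by (auto simp: u_def v_def)
        show "u \<noteq> v" using ne by (simp add: u_def v_def)
        show "idx s ((F s ^^ k) u) = idx s ((F s ^^ k) v)" for k
          using e[OF xy(1)] e[OF xy(2)] N[of "int k + int N"] by (simp add: u_def v_def)
      qed
    qed
  next
    show "\<not> neg_asymptotic (\<lambda>k. idx s (B.it k x)) (\<lambda>k. idx s (B.it k y))"
    proof
      assume "neg_asymptotic (\<lambda>k. idx s (B.it k x)) (\<lambda>k. idx s (B.it k y))"
      then obtain N where N: "\<And>i. i \<le> - int N \<Longrightarrow> idx s (B.it i x) = idx s (B.it i y)"
        unfolding neg_asymptotic_def by blast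
      define u where "u = B.it (- int N) x"
      define v where "v = B.it (- int N) y"
      have e: "(G s ^^ k) (B.it (- int N) w) = B.it (- int k + - int N) w" if "w \<in> A s" for w k
        using B.it_add[OF that, of "- int k" "- int N"] B.it_neg g_eq by simp
      show False
      proof (rule no_bwd_any[of u s v])
        show "u \<in> A s" "v \<in> A s" using B.it_A xy by (auto simp: u_def v_def)
        show "u \<noteq> v" using ne by (simp add: u_def v_def)
        show "idx s ((G s ^^ k) u) = idx s ((G s ^^ k) v)" if "1 \<le> k" for k
          using e[OF xy(1)] e[OF xy(2)] N[of "- int k + - int N"] by (simp add: u_def v_def)
      qed
    qed
  qed
qed

end
end



context ietl begin

abbreviation itT where "itT k x \<equiv> iter_int (F True) (A True) k x"

definition Dset where "Dset = b ` {1..n-1}"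
definition Dinf where "Dinf = {0,1} \<union> (\<Union>k::int. (\<lambda>x. itT k x) ` Dset)"
definition Rset where "Rset = {0..1} - Dinf"
definition X0 where "X0 = (\<lambda>x k. idx True (itT k x)) ` Rset"

lemma RA: "x \<in> Rset \<Longrightarrow> x \<in> A True" by (auto simp: Rset_def Dinf_def A_def mem_def)

lemma bA: assumes "l \<in> {1..n-1}" shows "b l \<in> A True"
proof -
  have "b 0 < b l" "b l < b n" using assms by (auto intro!: part.less[OF pb])
  then show ?thesis using part.c0[OF pb] part.cn[OF pb] by (simp add: A_def mem_def)
qed

lemma not_b: assumes "x \<in> Rset" "l \<in> {1..n-1}" shows "itT m x \<noteq> b l"
proof
  interpret B: bijA "F True" "A True" by (rule bijA)
  assume "itT m x = b l"
  then have "x = itT (- m) (b l)" using B.it_inv RA[OF assms(1)] by metis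
  then have "x \<in> Dinf" using assms(2) unfolding Dinf_def Dset_def by blast
  then show False using assms(1) by (simp add: Rset_def)
qed

lemma F_b: assumes "i \<in> {1..n}" shows "F True (b (i - 1)) = bt (\<tau> i - 1)"
proof -
  have "b (i - 1) < b i" using assms by (auto intro!: part.less[OF pb])
  then have "mem True (b (i - 1)) (b i) (b (i - 1))" by (simp add: mem_def)
  then have "idx True (b (i - 1)) = i" by (rule idx_eq[OF assms])
  then show ?thesis by (simp add: F_def cc_def)
qed

lemma bt_orbit: assumes "l \<in> {1..n-1}" shows "\<exists>d\<in>Dset. \<exists>j. bt l = itT j d"
proof -
  interpret B: bijA "F True" "A True" by (rule bijA)
  have "l + 1 \<in> {1..n}" using assms by auto
  then obtain i where i: "i \<in> {1..n}" "\<tau> i = l + 1" using tau_surj by blast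
  have Fi: "F True (b (i - 1)) = bt l" using F_b[OF i(1)] i(2) by simp
  show ?thesis
  proof (cases "i \<ge> 2")
    case True
    then have "b (i - 1) \<in> Dset" using i(1) unfolding Dset_def by (intro image_eqI[of _ _ "i - 1"]) auto
    moreover have "itT 1 (b (i - 1)) = bt l" using B.it_pos[of 1] Fi by simp
    ultimately show ?thesis by metis
  next
    case False
    then have i1: "i = 1" using i(1) by auto
    have "(1::nat) \<in> {1..n}" using assms by auto
    then obtain i' where i': "i' \<in> {1..n}" "\<tau> i' = 1" using tau_surj[of 1] by blast
    have "i' \<noteq> 1" using i' i i1 assms by auto
    then have "b (i' - 1) \<in> Dset" using i'(1) unfolding Dset_def by (intro image_eqI[of _ _ "i' - 1"]) auto
    moreover have "F True (b (i' - 1)) = b (i - 1)"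
      using F_b[OF i'(1)] i'(2) i1 part.c0[OF pb] part.c0[OF pbt] by simp
    then have "itT 2 (b (i' - 1)) = bt l" using B.it_pos[of 2] Fi by (simp add: numeral_2_eq_2)
    ultimately show ?thesis by metis
  qed
qed

lemma not_bt: assumes "x \<in> Rset" "l \<in> {1..n-1}" shows "itT m x \<noteq> bt l"
proof
  interpret B: bijA "F True" "A True" by (rule bijA)
  assume e: "itT m x = bt l"
  obtain d j where d: "d \<in> Dset" "bt l = itT j d" using bt_orbit[OF assms(2)] by blast
  have dA: "d \<in> A True" using d(1) bA by (auto simp: Dset_def)
  have "x = itT (- m) (itT j d)" using B.it_inv RA[OF assms(1)] e d(2) by metis
  also have "\<dots> = itT (- m + j) d" by (rule B.it_add[OF dA, symmetric])
  finally have "x \<in> Dinf" using d(1) unfolding Dinf_def by blast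
  then show False using assms(1) by (simp add: Rset_def)
qed

lemma window: assumes "\<beta> \<in> closure X0"
  shows "\<exists>y\<in>Rset. \<forall>i\<in>{lo..hi}. idx True (itT i y) = \<beta> i"
  using closure_window[OF assms, of lo hi] unfolding X0_def by auto

end



context ietl begin
context
  assumes noper: "\<not> (\<exists>x\<in>A True. \<exists>k\<ge>1. (F True ^^ k) x = x)"
    and n2: "n \<ge> 2"
begin

lemma part3_pos:
  assumes xR: "x \<in> Rset" and bet: "\<beta> \<in> closure X0" and ne: "(\<lambda>k. idx True (itT k x)) \<noteq> \<beta>"
  shows "\<not> pos_asymptotic (\<lambda>k. idx True (itT k x)) \<beta>"
proof
  interpret B: bijA "F True" "A True" by (rule bijA)
  define \<alpha> where "\<alpha> = (\<lambda>k. idx True (itT k x))"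
  assume "pos_asymptotic (\<lambda>k. idx True (itT k x)) \<beta>"
  then obtain N where N: "\<And>i. int N \<le> i \<Longrightarrow> \<alpha> i = \<beta> i"
    unfolding pos_asymptotic_def \<alpha>_def by blast
  obtain i0 where i0: "\<alpha> i0 \<noteq> \<beta> i0" using ne unfolding \<alpha>_def by blast
  have i0N: "i0 < int N" using N i0 by (metis not_le)
  define S where "S = {i0..int N} \<inter> {i. \<alpha> i \<noteq> \<beta> i}"
  have finS: "finite S" "i0 \<in> S" using i0 i0N by (auto simp: S_def)
  define m where "m = Max S + 1"
  have agree: "\<alpha> i = \<beta> i" if "m \<le> i" for i
  proof (rule ccontr)
    assume d: "\<alpha> i \<noteq> \<beta> i"
    then have "i < int N" using N by (metis not_le)
    moreover have "i0 \<le> i" using that Max_ge[OF finS] unfolding m_def by linarith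
    ultimately have "i \<in> S" using d by (auto simp: S_def)
    then show False using Max_ge[OF finS(1)] that unfolding m_def by fastforce
  qed
  have "Max S \<in> S" by (rule Max_in[OF finS(1)]) (use finS(2) in auto)
  then have "Max S \<in> {i. \<alpha> i \<noteq> \<beta> i}" unfolding S_def by blast
  then have diff: "\<alpha> (m - 1) \<noteq> \<beta> (m - 1)" unfolding m_def by simp
  have xA: "x \<in> A True" by (rule RA[OF xR])
  define p where "p = itT m x"
  have pA: "p \<in> A True" using B.it_A[OF xA] by (simp add: p_def)
  define \<delta> where "\<delta> = Min ((\<lambda>l. \<bar>p - bt l\<bar>) ` {1..n-1})"
  have ne1: "{1..n-1} \<noteq> {}" using n2 by auto
  have d0: "\<delta> > 0" unfolding \<delta>_def using ne1 not_bt[OF xR] by (auto simp: p_def)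
  have H: "\<exists>q\<in>A True. \<delta> \<le> \<bar>p - q\<bar> \<and> (\<forall>k\<le>K. \<forall>z. betw p q z \<longrightarrow> (F True ^^ k) z = z + ((F True ^^ k) p - p))" for K
  proof -
    obtain y where y: "y \<in> Rset" "\<And>i. i \<in> {m - 1..m + int K} \<Longrightarrow> idx True (itT i y) = \<beta> i"
      using window[OF bet] by blast
    have yA: "y \<in> A True" by (rule RA[OF y(1)])
    define q where "q = itT m y"
    have qA: "q \<in> A True" using B.it_A[OF yA] by (simp add: q_def)
    have ep: "(F True ^^ k) (itT m w) = itT (int k + m) w" if "w \<in> A True" for w k
      using B.it_add[OF that, of "int k" m] B.it_pos by simp
    have eq: "idx True ((F True ^^ k) p) = idx True ((F True ^^ k) q)" if "k < K" for k
    proof -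
      have "idx True ((F True ^^ k) p) = \<alpha> (int k + m)" using ep[OF xA] by (simp add: p_def \<alpha>_def)
      also have "\<dots> = \<beta> (int k + m)" by (rule agree) simp
      also have "\<dots> = idx True ((F True ^^ k) q)" using y(2)[of "int k + m"] that ep[OF yA] by (simp add: q_def)
      finally show ?thesis .
    qed
    have tr: "\<forall>k\<le>K. \<forall>z. betw p q z \<longrightarrow> (F True ^^ k) z = z + ((F True ^^ k) p - p)"
      using fwd_fin[OF pA qA eq] by blast
    have Gp: "G True p = itT (m - 1) x" using B.it_pred[OF xA, of m] g_eq by (simp add: p_def)
    have Gq: "G True q = itT (m - 1) y" using B.it_pred[OF yA, of m] g_eq by (simp add: q_def)
    define i where "i = idx True (G True p)"
    define i' where "i' = idx True (G True q)"
    have ii': "i \<noteq> i'" using diff y(2)[of "m - 1"] Gp Gq by (simp add: i_def i'_def \<alpha>_def)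
    have iin: "i \<in> {1..n}" "i' \<in> {1..n}" using idx_mem(1) G_A pA qA by (auto simp: i_def i'_def)
    have "mem True (bt (\<tau> i - 1)) (bt (\<tau> i)) p" using F_img[OF G_A[OF pA]] FG[OF pA] by (simp add: i_def)
    moreover have "mem True (bt (\<tau> i' - 1)) (bt (\<tau> i')) q" using F_img[OF G_A[OF qA]] FG[OF qA] by (simp add: i'_def)
    moreover have "\<tau> i \<noteq> \<tau> i'" using tau_inj iin ii' by blast
    ultimately obtain l where l: "l \<in> {1..n-1}" "\<bar>p - bt l\<bar> \<le> \<bar>p - q\<bar>"
      using part.sep[OF pbt tau_in[OF iin(1)] tau_in[OF iin(2)]] by blast
    have "\<delta> \<le> \<bar>p - bt l\<bar>" unfolding \<delta>_def using l(1) by (intro Min_le) auto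
    then show ?thesis using l(2) qA tr by (intro bexI[of _ q]) auto
  qed
  have fa: "\<And>x. x \<in> A True \<Longrightarrow> F True x \<in> A True" by (rule F_A)
  have cv: "\<And>u v z. u \<in> A True \<Longrightarrow> v \<in> A True \<Longrightarrow> betw u v z \<Longrightarrow> z \<in> A True" by (rule A_conv)
  have inj: "inj_on (F True) (A True)" by (rule F_inj)
  have a01: "A True \<subseteq> {0..1}" by (rule A01)
  obtain lo m' where "lo \<in> A True" "m' \<ge> 1" "(F True ^^ m') lo = lo"
  proof -
    have "\<exists>lo\<in>A True. \<exists>m\<ge>1. (F True ^^ m) lo = lo"
      using a01 fa inj cv pA d0 H by (rule side_lemma)
    then show ?thesis using that by blast
  qed
  then show False using noper by blast
qed

lemma part3_neg:
  assumes xR: "x \<in> Rset" and bet: "\<beta> \<in> closure X0" and ne: "(\<lambda>k. idx True (itT k x)) \<noteq> \<beta>"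
  shows "\<not> neg_asymptotic (\<lambda>k. idx True (itT k x)) \<beta>"
proof
  interpret B: bijA "F True" "A True" by (rule bijA)
  define \<alpha> where "\<alpha> = (\<lambda>k. idx True (itT k x))"
  assume "neg_asymptotic (\<lambda>k. idx True (itT k x)) \<beta>"
  then obtain N where N: "\<And>i. i \<le> - int N \<Longrightarrow> \<alpha> i = \<beta> i"
    unfolding neg_asymptotic_def \<alpha>_def by blast
  obtain i0 where i0: "\<alpha> i0 \<noteq> \<beta> i0" using ne unfolding \<alpha>_def by blast
  have i0N: "- int N < i0" using N i0 by (metis not_le)
  define S where "S = {- int N..i0} \<inter> {i. \<alpha> i \<noteq> \<beta> i}"
  have finS: "finite S" "i0 \<in> S" using i0 i0N by (auto simp: S_def)
  define m where "m = Min S"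
  have agree: "\<alpha> i = \<beta> i" if "i < m" for i
  proof (rule ccontr)
    assume d: "\<alpha> i \<noteq> \<beta> i"
    then have "- int N < i" using N by (metis not_le)
    moreover have "i \<le> i0" using that Min_le[OF finS] unfolding m_def by linarith
    ultimately have "i \<in> S" using d by (auto simp: S_def)
    then show False using Min_le[OF finS(1)] that unfolding m_def by fastforce
  qed
  have "Min S \<in> S" by (rule Min_in[OF finS(1)]) (use finS(2) in auto)
  then have "Min S \<in> {i. \<alpha> i \<noteq> \<beta> i}" unfolding S_def by blast
  then have diff: "\<alpha> m \<noteq> \<beta> m" unfolding m_def by simp
  have xA: "x \<in> A True" by (rule RA[OF xR])
  define p where "p = itT m x"
  have pA: "p \<in> A True" using B.it_A[OF xA] by (simp add: p_def)
  define \<delta> where "\<delta> = Min ((\<lambda>l. \<bar>p - b l\<bar>) ` {1..n-1})"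
  have ne1: "{1..n-1} \<noteq> {}" using n2 by auto
  have d0: "\<delta> > 0" unfolding \<delta>_def using ne1 not_b[OF xR] by (auto simp: p_def)
  have H: "\<exists>q\<in>A True. \<delta> \<le> \<bar>p - q\<bar> \<and> (\<forall>k\<le>K. \<forall>z. betw p q z \<longrightarrow> (G True ^^ k) z = z + ((G True ^^ k) p - p))" for K
  proof -
    obtain y where y: "y \<in> Rset" "\<And>i. i \<in> {m - int K..m} \<Longrightarrow> idx True (itT i y) = \<beta> i"
      using window[OF bet] by blast
    have yA: "y \<in> A True" by (rule RA[OF y(1)])
    define q where "q = itT m y"
    have qA: "q \<in> A True" using B.it_A[OF yA] by (simp add: q_def)
    have ep: "(G True ^^ k) (itT m w) = itT (- int k + m) w" if "w \<in> A True" for w k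
      using B.it_add[OF that, of "- int k" m] B.it_neg g_eq by simp
    have eq: "idx True ((G True ^^ k) p) = idx True ((G True ^^ k) q)" if "1 \<le> k" "k \<le> K" for k
    proof -
      have "idx True ((G True ^^ k) p) = \<alpha> (- int k + m)" using ep[OF xA] by (simp add: p_def \<alpha>_def)
      also have "\<dots> = \<beta> (- int k + m)" by (rule agree) (use that in simp)
      also have "\<dots> = idx True ((G True ^^ k) q)" using y(2)[of "- int k + m"] that ep[OF yA] by (simp add: q_def)
      finally show ?thesis .
    qed
    have tr: "\<forall>k\<le>K. \<forall>z. betw p q z \<longrightarrow> (G True ^^ k) z = z + ((G True ^^ k) p - p)"
      using bwd_fin[OF pA qA eq] by blast
    define i where "i = idx True p"
    define i' where "i' = idx True q"
    have ii': "i \<noteq> i'" using diff y(2)[of m] by (simp add: i_def i'_def \<alpha>_def p_def q_def)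
    have iin: "i \<in> {1..n}" "i' \<in> {1..n}" using idx_mem(1) pA qA by (auto simp: i_def i'_def)
    obtain l where l: "l \<in> {1..n-1}" "\<bar>p - b l\<bar> \<le> \<bar>p - q\<bar>"
      using part.sep[OF pb iin ii' idx_mem(2)[OF pA, folded i_def] idx_mem(2)[OF qA, folded i'_def]] by blast
    have "\<delta> \<le> \<bar>p - b l\<bar>" unfolding \<delta>_def using l(1) by (intro Min_le) auto
    then show ?thesis using l(2) qA tr by (intro bexI[of _ q]) auto
  qed
  have fa: "\<And>x. x \<in> A True \<Longrightarrow> G True x \<in> A True" by (rule G_A)
  have cv: "\<And>u v z. u \<in> A True \<Longrightarrow> v \<in> A True \<Longrightarrow> betw u v z \<Longrightarrow> z \<in> A True" by (rule A_conv)
  have inj: "inj_on (G True) (A True)" by (rule G_inj)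
  have a01: "A True \<subseteq> {0..1}" by (rule A01)
  obtain lo m' where lo: "lo \<in> A True" "m' \<ge> 1" "(G True ^^ m') lo = lo"
  proof -
    have "\<exists>lo\<in>A True. \<exists>m\<ge>1. (G True ^^ m) lo = lo"
      using a01 fa inj cv pA d0 H by (rule side_lemma)
    then show ?thesis using that by blast
  qed
  then have "(F True ^^ m') lo = lo" using FG_pow[OF lo(1), of m'] by simp
  then show False using noper lo by blast
qed

end
end



lemma sum_Suc_1: "(\<Sum>j=1..Suc i. f j) = (\<Sum>j=1..i. f j) + (f (Suc i) :: real)"
  by simp

theorem theorem4p4:
  fixes n :: nat and a :: "nat \<Rightarrow> real" and \<tau> :: "nat \<Rightarrow> nat"
  assumes n2: "n \<ge> 2"
    and apos: "\<forall>i\<in>{1..n}. a i > 0"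
    and asum: "(\<Sum>i=1..n. a i) = 1"
    and perm: "\<tau> permutes {1..n}"
    and noper: "\<not> has_periodic_point (iet_T n a \<tau>)"
  shows "(\<forall>x\<in>{0..<1}. \<forall>y\<in>{0..<1}. x \<noteq> y \<longrightarrow>
            \<not> pos_asymptotic (iet_itin n a \<tau> x) (iet_itin n a \<tau> y) \<and>
            \<not> neg_asymptotic (iet_itin n a \<tau> x) (iet_itin n a \<tau> y))
       \<and> (\<forall>x\<in>{0<..1}. \<forall>y\<in>{0<..1}. x \<noteq> y \<longrightarrow>
            \<not> pos_asymptotic (iet_itind n a \<tau> x) (iet_itind n a \<tau> y) \<and>
            \<not> neg_asymptotic (iet_itind n a \<tau> x) (iet_itind n a \<tau> y))
       \<and> (\<forall>\<alpha>\<in>iet_X n a \<tau>. \<forall>\<beta>\<in>iet_X n a \<tau>. \<alpha> \<noteq> \<beta> \<longrightarrow> \<alpha> \<in> iet_X0 n a \<tau> \<longrightarrow>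
            \<not> pos_asymptotic \<alpha> \<beta> \<and> \<not> neg_asymptotic \<alpha> \<beta>)
       \<and> inj_on (iet_itin n a \<tau>) {0..<1}
       \<and> inj_on (iet_itind n a \<tau>) {0<..1}"
proof -
  define b where "b = iet_b a"
  define bt where "bt = iet_btau n a \<tau>"
  define h where "h = inv_into {1..n} \<tau>"
  have bij\<tau>: "bij_betw \<tau> {1..n} {1..n}" using perm by (rule permutes_imp_bij)
  have bijh: "bij_betw h {1..n} {1..n}" unfolding h_def by (rule bij_betw_inv_into[OF bij\<tau>])
  have hin: "j \<in> {1..n} \<Longrightarrow> h j \<in> {1..n}" for j using bijh by (auto simp: bij_betw_def)
  have bS: "b (Suc i) = b i + a (Suc i)" for i by (simp add: b_def iet_b_def)
  have btS: "bt (Suc i) = bt i + a (h (Suc i))" for i by (simp add: bt_def iet_btau_def h_def)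
  have pb: "part n b"
  proof
    show "b i < b (Suc i)" if "i < n" for i using bS[of i] apos that by auto
    show "b 0 = 0" by (simp add: b_def iet_b_def)
    show "b n = 1" using asum by (simp add: b_def iet_b_def)
  qed
  have pbt: "part n bt"
  proof
    show "bt i < bt (Suc i)" if "i < n" for i using btS[of i] apos hin[of "Suc i"] that by auto
    show "bt 0 = 0" by (simp add: bt_def iet_btau_def)
    have "bt n = (\<Sum>j=1..n. a (h j))" by (simp add: bt_def iet_btau_def h_def)
    also have "\<dots> = (\<Sum>j=1..n. a j)" by (rule sum.reindex_bij_betw[OF bijh])
    finally show "bt n = 1" using asum by simp
  qed
  have len: "bt (\<tau> i) - bt (\<tau> i - 1) = b i - b (i - 1)" if "i \<in> {1..n}" for i
  proof -
    have t1: "\<tau> i \<ge> 1" "i \<ge> 1" using permutes_in_image[OF perm, of i] that by auto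
    have "bt (\<tau> i) = bt (\<tau> i - 1) + a (h (\<tau> i))" using btS[of "\<tau> i - 1"] t1 by simp
    moreover have "h (\<tau> i) = i" unfolding h_def
      using bij\<tau> that by (simp add: bij_betw_def inv_into_f_f)
    moreover have "b i = b (i - 1) + a i" using bS[of "i - 1"] t1 by simp
    ultimately show ?thesis by simp
  qed
  interpret I: ietl n b bt \<tau> unfolding ietl_def using pb pbt perm len by blast
  have A1: "I.A True = {0..<1}" by (auto simp: I.A_def mem_def)
  have A2: "I.A False = {0<..1}" by (auto simp: I.A_def mem_def)
  have idx1: "iet_idx n a x = I.idx True x" for x
    unfolding I.idx_def iet_idx_def iet_J_def by (simp add: mem_def b_def)
  have idx2: "iet_idxd n a x = I.idx False x" for x
    unfolding I.idx_def iet_idxd_def iet_Jd_def by (simp add: mem_def b_def)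
  have T1: "iet_T n a \<tau> = I.F True"
    by (rule ext) (simp add: iet_T_def I.F_def I.cc_def idx1 b_def[symmetric] bt_def[symmetric] Let_def)
  have T2: "iet_Td n a \<tau> = I.F False"
    by (rule ext) (simp add: iet_Td_def I.F_def I.cc_def idx2 b_def[symmetric] bt_def[symmetric] Let_def)
  have it1: "iet_itin n a \<tau> = (\<lambda>x k. I.idx True (iter_int (I.F True) (I.A True) k x))"
    by (intro ext) (simp add: iet_itin_def idx1 T1 A1)
  have it2: "iet_itind n a \<tau> = (\<lambda>x k. I.idx False (iter_int (I.F False) (I.A False) k x))"
    by (intro ext) (simp add: iet_itind_def idx2 T2 A2)
  have np: "\<not> (\<exists>x\<in>I.A True. \<exists>k\<ge>1. (I.F True ^^ k) x = x)"
    using noper unfolding has_periodic_point_def T1 A1 by blast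
  have X0: "iet_X0 n a \<tau> = I.X0"
    unfolding iet_X0_def I.X0_def iet_R_def I.Rset_def iet_Dinf_def I.Dinf_def iet_D_def I.Dset_def
    by (simp add: it1 T1 A1 b_def)
  have X: "iet_X n a \<tau> = closure I.X0" unfolding iet_X_def X0 ..
  have P1: "\<forall>x\<in>{0..<1}. \<forall>y\<in>{0..<1}. x \<noteq> y \<longrightarrow>
            \<not> pos_asymptotic (iet_itin n a \<tau> x) (iet_itin n a \<tau> y) \<and>
            \<not> neg_asymptotic (iet_itin n a \<tau> x) (iet_itin n a \<tau> y)"
    unfolding it1 using I.part12[OF np, of _ True] A1 by auto
  have P2: "\<forall>x\<in>{0<..1}. \<forall>y\<in>{0<..1}. x \<noteq> y \<longrightarrow>
            \<not> pos_asymptotic (iet_itind n a \<tau> x) (iet_itind n a \<tau> y) \<and>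
            \<not> neg_asymptotic (iet_itind n a \<tau> x) (iet_itind n a \<tau> y)"
    unfolding it2 using I.part12[OF np, of _ False] A2 by auto
  have P3: "\<forall>\<alpha>\<in>iet_X n a \<tau>. \<forall>\<beta>\<in>iet_X n a \<tau>. \<alpha> \<noteq> \<beta> \<longrightarrow> \<alpha> \<in> iet_X0 n a \<tau> \<longrightarrow>
            \<not> pos_asymptotic \<alpha> \<beta> \<and> \<not> neg_asymptotic \<alpha> \<beta>"
  proof (intro ballI impI)
    fix \<alpha> \<beta> assume ab: "\<beta> \<in> iet_X n a \<tau>" "\<alpha> \<noteq> \<beta>" "\<alpha> \<in> iet_X0 n a \<tau>"
    then obtain x where x: "x \<in> I.Rset" "\<alpha> = (\<lambda>k. I.idx True (I.itT k x))"
      unfolding X0 I.X0_def by blast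
    have "\<beta> \<in> closure I.X0" using ab X by simp
    then show "\<not> pos_asymptotic \<alpha> \<beta> \<and> \<not> neg_asymptotic \<alpha> \<beta>"
      using I.part3_pos[OF np n2 x(1)] I.part3_neg[OF np n2 x(1)] ab(2) x(2) by blast
  qed
  have triv: "pos_asymptotic f f" for f :: "int \<Rightarrow> nat" unfolding pos_asymptotic_def by blast
  have P4: "inj_on (iet_itin n a \<tau>) {0..<1}"
    using P1 triv by (metis inj_onI)
  have P5: "inj_on (iet_itind n a \<tau>) {0<..1}"
    using P2 triv by (metis inj_onI)
  show ?thesis using P1 P2 P3 P4 P5 by blast
qed


end
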